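(* Let $\Gamma$ be a finite Abelian group with $|\Gamma|=n$, let $S$ be a symmetric multiset of elements of $\Gamma$ with $|S|=d$, and let $G=\mathrm{Cay}(\Gamma,S)$. Let $0<\epsilon\le 1$ and $\tau = 100\, d\, \phi(G)^2/\epsilon^2$. Then for every $Q\subseteq \Gamma$ with $1\le |Q|\le n/2$ and $\phi_G(Q)\le 2\phi(G)$, $$\|\Pi_{\mathrm{LOW}_\tau(G)}\, \bar{\mathbf{1}}_Q\|^2 \ge (1-\epsilon)\,\|\bar{\mathbf{1}}_Q\|^2.$$
   Context: A multiset $S$ of elements of $\Gamma$ is symmetric if $x$ and $-x$ have equal multiplicity for all $x$. $\mathrm{Cay}(\Gamma,S)$ has vertex set $\Gamma$ and an edge $(v,v+s)$ for every $v$ and every element $s$ of $S$ (with multiplicity). $\phi_G(Q)=|\partial Q|/(d|Q|)$ where $\partial Q$ is the multiset of edges from $Q$ to its complement, and $\phi(G)=\min\{\phi_G(Q):1\le|Q|\le n/2\}$. The normalized Laplacian is $\mathbf{L}=I-\mathbf{A}$ ($\mathbf{A}$ the normalized adjacency matrix). $\mathrm{LOW}_\tau(G)$ is the span of all eigenvectors of $\mathbf{L}$ with eigenvalue at most $\tau$ (the whole space if $\tau\ge2$), and $\Pi_W$ denotes orthogonal projection onto $W$. $\mathbf{1}_Q$ is the indicator vector of $Q$ and $\bar x = x-\frac{\langle x,\mathbf 1\rangle}{n}\mathbf 1$. *)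

theory Defs
  imports "HOL-Analysis.Analysis" "HOL-Library.Multiset"
begin

definition symmetric_mset :: "'a::ab_group_add multiset \<Rightarrow> bool" where
  "symmetric_mset S \<longleftrightarrow> (\<forall>x. count S x = count S (- x))"

text \<open>Adjacency: number of edges (u, u+s), s in S, from u to v.\<close>
definition cay_adj :: "'a::ab_group_add multiset \<Rightarrow> 'a \<Rightarrow> 'a \<Rightarrow> real" where
  "cay_adj S u v = real (count S (v - u))"

definition cay_laplacian :: "('a::{ab_group_add,finite}) multiset \<Rightarrow> (real, 'a) vec \<Rightarrow> (real, 'a) vec" where
  "cay_laplacian S x = (\<chi> u. x $ u - (\<Sum>v\<in>UNIV. cay_adj S u v * x $ v) / real (size S))"

definition cay_boundary :: "'a::{ab_group_add,finite} multiset \<Rightarrow> 'a set \<Rightarrow> real" where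
  "cay_boundary S Q = (\<Sum>u\<in>Q. \<Sum>v\<in>UNIV - Q. cay_adj S u v)"

definition cay_cond_set :: "'a::{ab_group_add,finite} multiset \<Rightarrow> 'a set \<Rightarrow> real" where
  "cay_cond_set S Q = cay_boundary S Q / (real (size S) * real (card Q))"

definition cay_conductance :: "'a::{ab_group_add,finite} multiset \<Rightarrow> real" where
  "cay_conductance S = Min {cay_cond_set S Q | Q::'a set.
      1 \<le> card Q \<and> real (card Q) \<le> real CARD('a) / 2}"

definition low_space :: "('a::{ab_group_add,finite}) multiset \<Rightarrow> real \<Rightarrow> ((real, 'a) vec) set" where
  "low_space S \<tau> = (if \<tau> \<ge> 2 then UNIV
     else span {x. x \<noteq> 0 \<and> (\<exists>lam. lam \<le> \<tau> \<and> cay_laplacian S x = lam *\<^sub>R x)})"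

definition orth_proj :: "('b::euclidean_space) set \<Rightarrow> 'b \<Rightarrow> 'b" where
  "orth_proj W x = (THE p. p \<in> W \<and> (\<forall>w\<in>W. inner (x - p) w = 0))"

definition indicator_vec :: "'a::finite set \<Rightarrow> (real, 'a) vec" where
  "indicator_vec Q = (\<chi> u. if u \<in> Q then 1 else 0)"

definition centered :: "(real, 'a::finite) vec \<Rightarrow> (real, 'a) vec" where
  "centered x = x - ((\<Sum>u\<in>UNIV. x $ u) / real CARD('a)) *\<^sub>R (\<chi> u. 1)"

end

theory Submission
  imports Defs
begin

lemma sum_shift_univ:
  fixes f :: "'a::{ab_group_add,finite} \<Rightarrow> 'b::comm_monoid_add"
  shows "(\<Sum>u\<in>UNIV. f (u + a)) = (\<Sum>u\<in>UNIV. f u)"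
  by (rule sum.reindex_bij_witness[of _ "\<lambda>u. u - a" "\<lambda>u. u + a"]) auto

lemma sum_neg_univ:
  fixes f :: "'a::{ab_group_add,finite} \<Rightarrow> 'b::comm_monoid_add"
  shows "(\<Sum>u\<in>UNIV. f (- u)) = (\<Sum>u\<in>UNIV. f u)"
  by (rule sum.reindex_bij_witness[of _ "\<lambda>u. - u" "\<lambda>u. - u"]) auto

lemma spectral_bound:
  fixes M :: "'v::euclidean_space \<Rightarrow> 'v"
  assumes lin: "linear M"
    and sym: "\<And>x y. inner (M x) y = inner x (M y)"
    and psd: "\<And>x. inner x (M x) \<ge> 0"
    and subV: "subspace V"
    and inv: "\<And>z. z \<in> V \<Longrightarrow> M z \<in> V"
    and eig: "\<And>w \<mu>. w \<in> V \<Longrightarrow> w \<noteq> 0 \<Longrightarrow> M w = \<mu> *\<^sub>R w \<Longrightarrow> \<mu> < b"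
    and bpos: "b > 0"
    and yV: "y \<in> V"
  shows "norm (M y) \<le> b * norm y"
proof (cases "V \<inter> sphere 0 1 = {}")
  case True
  have "y = 0"
  proof (rule ccontr)
    assume "y \<noteq> 0"
    then have "(1 / norm y) *\<^sub>R y \<in> V \<inter> sphere 0 1"
      using yV subV by (simp add: subspace_scale)
    then show False using True by blast
  qed
  then show ?thesis using lin by (simp add: linear_0)
next
  case False
  let ?K = "V \<inter> sphere 0 1"
  have bl: "bounded_linear M" using lin by (simp add: linear_conv_bounded_linear)
  have compK: "compact ?K"
    by (intro closed_Int_compact closed_subspace subV compact_sphere)
  have contf: "continuous_on ?K (\<lambda>y. (norm (M y))^2)"
    by (intro continuous_intros linear_continuous_on bl)
  obtain v where vK: "v \<in> ?K" and vmax: "\<And>y. y \<in> ?K \<Longrightarrow> (norm (M y))^2 \<le> (norm (M v))^2"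
    using continuous_attains_sup[OF compK _ contf] False by blast
  define \<rho> where "\<rho> = (norm (M v))^2"
  have vV: "v \<in> V" and nv: "norm v = 1" using vK by auto
  have bnd: "(norm (M y))^2 \<le> \<rho> * (norm y)^2" if "y \<in> V" for y
  proof (cases "y = 0")
    case True then show ?thesis using lin by (simp add: linear_0)
  next
    case False
    then have "(1 / norm y) *\<^sub>R y \<in> ?K" using that subV by (simp add: subspace_scale)
    then have "(norm (M ((1 / norm y) *\<^sub>R y)))^2 \<le> \<rho>" using vmax \<rho>_def by blast
    then have "(norm (M y))^2 / (norm y)^2 \<le> \<rho>"
      using False by (simp add: linear_scale[OF lin] power_divide)
    then show ?thesis using False by (simp add: divide_le_eq mult.commute)
  qed
  define C where "C h = \<rho> *\<^sub>R h - M (M h)" for h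
  have linC: "linear C" unfolding C_def
    by (rule linearI) (simp_all add: linear_add[OF lin] linear_scale[OF lin] algebra_simps)
  have q: "inner h (C h) = \<rho> * (norm h)^2 - (norm (M h))^2" for h
    by (simp add: C_def inner_diff_right sym[symmetric] power2_norm_eq_inner)
  have symC: "inner h (C g) = inner g (C h)" for h g
  proof -
    have "inner h (M (M g)) = inner (M (M h)) g" by (simp add: sym[symmetric])
    then show ?thesis by (simp add: C_def inner_diff_right inner_commute)
  qed
  have qnn: "inner h (C h) \<ge> 0" if "h \<in> V" for h using bnd[OF that] q by simp
  have qv: "inner v (C v) = 0" using q nv \<rho>_def by simp
  have orth: "inner h (C v) = 0" if hV: "h \<in> V" for h
  proof -
    define a where "a = inner h (C v)"
    define Q where "Q = inner h (C h)"
    have Q0: "Q \<ge> 0" using qnn hV Q_def by simp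
    have all: "2 * t * a + t^2 * Q \<ge> 0" for t
    proof -
      have "v + t *\<^sub>R h \<in> V" using vV hV subV by (simp add: subspace_add subspace_scale)
      then have "inner (v + t *\<^sub>R h) (C (v + t *\<^sub>R h)) \<ge> 0" by (rule qnn)
      moreover have "inner (v + t *\<^sub>R h) (C (v + t *\<^sub>R h)) = inner v (C v) + 2 * t * a + t^2 * Q"
        using symC[of v h]
        by (simp add: linear_add[OF linC] linear_scale[OF linC] inner_add_left inner_add_right
            a_def Q_def power2_eq_square algebra_simps)
      ultimately show ?thesis using qv by simp
    qed
    define t where "t = - a / (Q + 1)"
    have ta: "a = - t * (Q + 1)" using Q0 by (simp add: t_def)
    have "2 * t * a + t^2 * Q \<ge> 0" by (rule all)
    then have "- (t^2 * (Q + 2)) \<ge> 0" unfolding ta by (simp add: algebra_simps power2_eq_square)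
    then have "t^2 * (Q + 2) \<le> 0" by linarith
    then have "t = 0" using Q0 by (smt (verit) mult_pos_pos zero_less_power2)
    then have "a = 0" using ta by simp
    then have "a^2 \<le> 0" by simp
    then show ?thesis unfolding a_def by simp
  qed
  have CvV: "C v \<in> V" unfolding C_def using vV inv subV by (simp add: subspace_diff subspace_scale)
  have Cv0: "C v = 0" using orth[OF CvV] by simp
  then have MMv: "M (M v) = \<rho> *\<^sub>R v" unfolding C_def by simp
  define r where "r = sqrt \<rho>"
  have r0: "r \<ge> 0" and rr: "r * r = \<rho>" using \<rho>_def by (auto simp: r_def power2_eq_square)
  have "\<rho> < b^2"
  proof (cases "M v + r *\<^sub>R v = 0")
    case True
    then have "M v = - r *\<^sub>R v" by (simp add: eq_neg_iff_add_eq_0)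
    then have "inner v (M v) = - r" using nv by (simp add: power2_norm_eq_inner[symmetric])
    then have "r = 0" using psd[of v] r0 by simp
    then show ?thesis using rr bpos by simp
  next
    case False
    have "M (M v + r *\<^sub>R v) = r *\<^sub>R (M v + r *\<^sub>R v)"
      using MMv rr by (simp add: linear_add[OF lin] linear_scale[OF lin] algebra_simps)
    moreover have "M v + r *\<^sub>R v \<in> V" using vV inv subV by (simp add: subspace_add subspace_scale)
    ultimately have "r < b" using eig False by blast
    then have "r * r < b * b" using r0 by (simp add: mult_strict_mono)
    then show ?thesis using rr by (simp add: power2_eq_square)
  qed
  then have "(norm (M y))^2 \<le> (b * norm y)^2"
    using bnd[OF yV] by (simp add: power_mult_distrib) (smt (verit) mult_right_mono zero_le_power2)
  then show ?thesis using bpos by (simp add: power2_le_iff_abs_le)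
qed

primrec nmul :: "nat \<Rightarrow> 'b::monoid_add \<Rightarrow> 'b" where
  "nmul 0 a = 0" | "nmul (Suc n) a = a + nmul n a"

definition zmul :: "int \<Rightarrow> 'b::ab_group_add \<Rightarrow> 'b" where
  "zmul j a = (if 0 \<le> j then nmul (nat j) a else - nmul (nat (- j)) a)"

lemma zmul_0 [simp]: "zmul 0 a = 0" by (simp add: zmul_def)

lemma zmul_plus1: "zmul (j + 1) a = zmul j a + a"
proof (cases "0 \<le> j")
  case True
  then have "nat (j + 1) = Suc (nat j)" by simp
  then show ?thesis using True by (simp add: zmul_def add.commute)
next
  case False
  show ?thesis
  proof (cases "j = -1")
    case True then show ?thesis by (simp add: zmul_def)
  next
    case False2: False
    then have "nat (- j) = Suc (nat (- (j + 1)))" using False by simp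
    then show ?thesis using False False2 by (simp add: zmul_def)
  qed
qed

lemma zmul_minus1: "zmul (j - 1) a = zmul j a - a"
  using zmul_plus1[of "j - 1" a] by simp

definition Gm :: "('a::{ab_group_add,finite} \<Rightarrow> int) \<Rightarrow> 'a" where
  "Gm m = (\<Sum>w\<in>UNIV. zmul (m w) w)"

lemma Gm_upd: "Gm (m(v := j)) = Gm m - zmul (m v) v + zmul j v"
proof -
  have "Gm (m(v := j)) = zmul j v + (\<Sum>w\<in>UNIV - {v}. zmul (m w) w)"
    unfolding Gm_def by (subst sum.remove[of UNIV v]) (auto intro!: sum.cong)
  moreover have "Gm m = zmul (m v) v + (\<Sum>w\<in>UNIV - {v}. zmul (m w) w)"
    unfolding Gm_def by (subst sum.remove[of UNIV v]) auto
  ultimately show ?thesis by (simp add: algebra_simps)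
qed

lemma Gm_plus: "Gm (m(v := m v + 1)) = Gm m + v"
  by (simp add: Gm_upd zmul_plus1)

lemma Gm_minus: "Gm (m(v := m v - 1)) = Gm m - v"
  by (simp add: Gm_upd zmul_minus1)

lemma Gm_0: "Gm (\<lambda>_. 0) = 0" by (simp add: Gm_def)

definition qi :: "'a set \<Rightarrow> 'a \<Rightarrow> real" where
  "qi Q u = (if u \<in> Q then 1 else 0)"

definition psi :: "'a::{ab_group_add,finite} set \<Rightarrow> 'a \<Rightarrow> real" where
  "psi Q g = (\<Sum>u\<in>UNIV. qi Q u * (1 - qi Q (u + g)))"

lemma psi_nonneg: "psi Q g \<ge> 0"
  unfolding psi_def qi_def by (intro sum_nonneg) auto

lemma psi_0: "psi Q 0 = 0"
  unfolding psi_def qi_def by (intro sum.neutral) auto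

lemma psi_add: "psi Q (a + b) \<le> psi Q a + psi Q b"
proof -
  have pt: "qi Q u * (1 - qi Q (u + (a + b))) \<le> qi Q u * (1 - qi Q (u + a)) + qi Q (u + a) * (1 - qi Q ((u + a) + b))" for u
    by (simp add: qi_def add.assoc)
  have "psi Q (a + b) \<le> (\<Sum>u\<in>UNIV. qi Q u * (1 - qi Q (u + a)) + qi Q (u + a) * (1 - qi Q ((u + a) + b)))"
    unfolding psi_def by (rule sum_mono) (rule pt)
  also have "\<dots> = psi Q a + (\<Sum>u\<in>UNIV. qi Q (u + a) * (1 - qi Q ((u + a) + b)))"
    by (simp add: psi_def sum.distrib)
  also have "(\<Sum>u\<in>UNIV. qi Q (u + a) * (1 - qi Q ((u + a) + b))) = psi Q b"
    unfolding psi_def by (rule sum_shift_univ[of "\<lambda>u. qi Q u * (1 - qi Q (u + b))"])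
  finally show ?thesis .
qed

lemma psi_alt: "psi Q g = (\<Sum>u\<in>UNIV. qi Q u) - (\<Sum>u\<in>UNIV. qi Q u * qi Q (u + g))"
  by (simp add: psi_def algebra_simps sum_subtractf)

lemma psi_neg: "psi Q (- g) = psi Q g"
proof -
  have "(\<Sum>u\<in>UNIV. qi Q u * qi Q (u + - g)) = (\<Sum>u\<in>UNIV. qi Q (u + g) * qi Q (u + g + - g))"
    by (rule sum_shift_univ[symmetric])
  then show ?thesis by (simp add: psi_alt mult.commute)
qed

lemma psi_nmul: "psi Q (nmul n a) \<le> real n * psi Q a"
proof (induction n)
  case 0 then show ?case by (simp add: psi_0)
next
  case (Suc n)
  then show ?case using psi_add[of Q a "nmul n a"] by (simp add: algebra_simps)
qed

lemma psi_zmul: "psi Q (zmul j a) \<le> \<bar>real_of_int j\<bar> * psi Q a"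
  using psi_nmul[of Q "nat j" a] psi_nmul[of Q "nat (-j)" a]
  by (auto simp: zmul_def psi_neg)

lemma psi_sum: "finite A \<Longrightarrow> psi Q (\<Sum>w\<in>A. f w) \<le> (\<Sum>w\<in>A. psi Q (f w))"
proof (induction A rule: finite_induct)
  case empty then show ?case by (simp add: psi_0)
next
  case (insert x F)
  then show ?case using psi_add[of Q "f x" "sum f F"] by simp
qed

lemma psi_Gm: "psi Q (Gm m) \<le> (\<Sum>w\<in>UNIV. \<bar>real_of_int (m w)\<bar> * psi Q w)"
proof -
  have "psi Q (Gm m) \<le> (\<Sum>w\<in>UNIV. psi Q (zmul (m w) w))"
    unfolding Gm_def by (rule psi_sum) simp
  also have "\<dots> \<le> (\<Sum>w\<in>UNIV. \<bar>real_of_int (m w)\<bar> * psi Q w)"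
    by (rule sum_mono) (rule psi_zmul)
  finally show ?thesis .
qed

locale cay =
  fixes S :: "'a::{ab_group_add,finite} multiset"
  assumes symS: "symmetric_mset S" and neS: "S \<noteq> {#}"
begin

abbreviation c :: "'a \<Rightarrow> real" where "c v \<equiv> real (count S v)"
abbreviation d :: real where "d \<equiv> real (size S)"

lemma c_neg: "c (- v) = c v"
  using symS unfolding symmetric_mset_def by metis

lemma sum_c: "(\<Sum>v\<in>UNIV. c v) = d"
proof -
  have "size S = (\<Sum>v\<in>set_mset S. count S v)"
    by (simp add: size_multiset_overloaded_eq)
  also have "\<dots> = (\<Sum>v\<in>UNIV. count S v)"
    by (rule sum.mono_neutral_left) (auto simp: count_eq_zero_iff)
  finally show ?thesis by (metis of_nat_sum)
qed

lemma d_pos: "d > 0"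
  using neS by (simp add: size_eq_0_iff_empty[symmetric] del: size_eq_0_iff_empty)

definition Mop :: "(real, 'a) vec \<Rightarrow> (real, 'a) vec" where
  "Mop z = (\<chi> u. (\<Sum>v\<in>UNIV. c v * (z$(u+v) + 2 * z$u + z$(u-v))) / (4 * d))"

lemma Mop_nth: "Mop z $ u = (\<Sum>v\<in>UNIV. c v * (z$(u+v) + 2 * z$u + z$(u-v))) / (4 * d)"
  by (simp add: Mop_def)

lemma sum_c_minus: "(\<Sum>v\<in>UNIV. c v * f (u - v)) = (\<Sum>v\<in>UNIV. c v * f (u + v))"
proof -
  have "(\<Sum>v\<in>UNIV. c v * f (u - v)) = (\<Sum>v\<in>UNIV. c (- v) * f (u - - v))"
    by (rule sum_neg_univ[symmetric])
  then show ?thesis by (simp add: c_neg)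
qed

lemma Mop_nth2: "Mop z $ u = z$u / 2 + (\<Sum>v\<in>UNIV. c v * z$(u+v)) / (2 * d)"
proof -
  have "(\<Sum>v\<in>UNIV. c v * (z$(u+v) + 2 * z$u + z$(u-v)))
      = (\<Sum>v\<in>UNIV. c v * z$(u+v)) + 2 * z$u * (\<Sum>v\<in>UNIV. c v) + (\<Sum>v\<in>UNIV. c v * z$(u-v))"
    by (simp add: algebra_simps sum.distrib sum_distrib_left)
  also have "\<dots> = 2 * (\<Sum>v\<in>UNIV. c v * z$(u+v)) + 2 * z$u * d"
    using sum_c_minus[of "\<lambda>w. z$w" u] by (simp add: sum_c)
  finally have "(\<Sum>v\<in>UNIV. c v * (z$(u+v) + 2 * z$u + z$(u-v))) = 2 * (\<Sum>v\<in>UNIV. c v * z$(u+v)) + 2 * z$u * d" .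
  then show ?thesis using d_pos neS by (simp add: Mop_nth add_divide_distrib)
qed

lemma lap_nth: "cay_laplacian S z $ u = z$u - (\<Sum>v\<in>UNIV. c v * z$(u+v)) / d"
proof -
  have "(\<Sum>v\<in>UNIV. cay_adj S u v * z $ v) = (\<Sum>v\<in>UNIV. cay_adj S u (v + u) * z $ (v + u))"
    by (rule sum_shift_univ[symmetric])
  then show ?thesis by (simp add: cay_laplacian_def cay_adj_def add.commute)
qed

lemma Mop_lap: "Mop z = z - (1/2) *\<^sub>R cay_laplacian S z"
  using d_pos neS by (simp add: vec_eq_iff Mop_nth2 lap_nth diff_divide_distrib)

lemma Mop_linear: "linear Mop"
  by (rule linearI) (simp_all add: vec_eq_iff Mop_nth algebra_simps sum.distrib sum_distrib_left add_divide_distrib)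

lemma Mop_one: "Mop (\<chi> u. 1) = (\<chi> u. 1)"
  using d_pos neS by (simp add: vec_eq_iff Mop_nth2 sum_c)

lemma inner_vec: "inner x y = (\<Sum>u\<in>UNIV. x$u * y$u)"
  by (simp add: inner_vec_def)

lemma Mop_sym: "inner (Mop z) w = inner z (Mop w)"
proof -
  have key: "(\<Sum>u\<in>UNIV. (z$(u+v) + 2 * z$u + z$(u-v)) * w$u)
      = (\<Sum>u\<in>UNIV. z$u * (w$(u+v) + 2 * w$u + w$(u-v)))" for v
  proof -
    have a: "(\<Sum>u\<in>UNIV. z$(u+v) * w$u) = (\<Sum>u\<in>UNIV. z$u * w$(u-v))"
      using sum_shift_univ[of "\<lambda>u. z$u * w$(u-v)" v] by simp
    have b: "(\<Sum>u\<in>UNIV. z$(u-v) * w$u) = (\<Sum>u\<in>UNIV. z$u * w$(u+v))"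
      using sum_shift_univ[of "\<lambda>u. z$u * w$(u+v)" "-v"] by simp
    show ?thesis using a b by (simp add: algebra_simps sum.distrib sum_distrib_left)
  qed
  have "inner (Mop z) w = (\<Sum>v\<in>UNIV. c v * (\<Sum>u\<in>UNIV. (z$(u+v) + 2 * z$u + z$(u-v)) * w$u)) / (4*d)"
    by (simp add: inner_vec Mop_nth sum_divide_distrib sum_distrib_left sum_distrib_right
        mult.assoc mult.commute mult.left_commute) (subst sum.swap, simp)
  also have "\<dots> = (\<Sum>v\<in>UNIV. c v * (\<Sum>u\<in>UNIV. z$u * (w$(u+v) + 2 * w$u + w$(u-v)))) / (4*d)"
    by (simp add: key)
  also have "\<dots> = inner z (Mop w)"
    by (simp add: inner_vec Mop_nth sum_divide_distrib sum_distrib_left sum_distrib_right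
        mult.assoc mult.commute mult.left_commute) (subst sum.swap, simp)
  finally show ?thesis .
qed

lemma Mop_psd: "inner z (Mop z) \<ge> 0"
proof -
  have key: "(\<Sum>u\<in>UNIV. z$u * (z$(u+v) + 2 * z$u + z$(u-v))) = (\<Sum>u\<in>UNIV. (z$u + z$(u+v))^2)" for v
  proof -
    have a: "(\<Sum>u\<in>UNIV. z$u * z$(u-v)) = (\<Sum>u\<in>UNIV. z$(u+v) * z$u)"
      using sum_shift_univ[of "\<lambda>u. z$u * z$(u-v)" v] by simp
    have b: "(\<Sum>u\<in>UNIV. (z$(u+v))^2) = (\<Sum>u\<in>UNIV. (z$u)^2)"
      using sum_shift_univ[of "\<lambda>u. (z$u)^2" v] by simp
    show ?thesis using a b by (simp add: algebra_simps power2_eq_square sum.distrib sum_distrib_left)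
  qed
  have "inner z (Mop z) = (\<Sum>v\<in>UNIV. c v * (\<Sum>u\<in>UNIV. z$u * (z$(u+v) + 2 * z$u + z$(u-v)))) / (4*d)"
    by (simp add: inner_vec Mop_nth sum_divide_distrib sum_distrib_left sum_distrib_right
        mult.assoc mult.commute mult.left_commute) (subst sum.swap, simp)
  also have "\<dots> \<ge> 0" unfolding key using d_pos
    by (intro divide_nonneg_pos sum_nonneg mult_nonneg_nonneg) auto
  finally show ?thesis .
qed

definition Tsh :: "'a \<Rightarrow> (real, 'a) vec \<Rightarrow> (real, 'a) vec" where
  "Tsh g z = (\<chi> u. z$(u+g))"

lemma norm_Tsh: "norm (Tsh g z) = norm z"
proof -
  have "inner (Tsh g z) (Tsh g z) = inner z z"
    using sum_shift_univ[of "\<lambda>u. z$u * z$u" g] by (simp add: inner_vec Tsh_def)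
  then show ?thesis by (simp add: norm_eq_sqrt_inner)
qed

lemma Mop_sum: "Mop z = (\<Sum>v\<in>UNIV. (c v / (4*d)) *\<^sub>R (Tsh v z + 2 *\<^sub>R z + Tsh (-v) z))"
  by (simp add: vec_eq_iff Mop_nth Tsh_def sum_divide_distrib)

lemma Mop_contr: "norm (Mop z) \<le> norm z"
proof -
  have "norm (Mop z) \<le> (\<Sum>v\<in>UNIV. norm ((c v / (4*d)) *\<^sub>R (Tsh v z + 2 *\<^sub>R z + Tsh (-v) z)))"
    unfolding Mop_sum by (rule norm_sum)
  also have "\<dots> \<le> (\<Sum>v\<in>UNIV. (c v / (4*d)) * (4 * norm z))"
  proof (rule sum_mono)
    fix v
    have "norm (Tsh v z + 2 *\<^sub>R z + Tsh (-v) z) \<le> norm (Tsh v z) + norm (2 *\<^sub>R z) + norm (Tsh (-v) z)"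
      by (smt (verit) norm_triangle_ineq)
    then have "norm (Tsh v z + 2 *\<^sub>R z + Tsh (-v) z) \<le> 4 * norm z" by (simp add: norm_Tsh)
    then have "(c v / (4*d)) * norm (Tsh v z + 2 *\<^sub>R z + Tsh (-v) z) \<le> (c v / (4*d)) * (4 * norm z)"
      using d_pos by (intro mult_left_mono) auto
    then show "norm ((c v / (4*d)) *\<^sub>R (Tsh v z + 2 *\<^sub>R z + Tsh (-v) z)) \<le> (c v / (4*d)) * (4 * norm z)"
      using d_pos by simp
  qed
  also have "\<dots> = norm z" using d_pos neS by (simp add: sum_distrib_right[symmetric] sum_divide_distrib[symmetric] sum_c)
  finally show ?thesis .
qed


definition avg :: "(('a \<Rightarrow> int) \<Rightarrow> real) \<Rightarrow> ('a \<Rightarrow> int) \<Rightarrow> real" where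
  "avg f m = (\<Sum>v\<in>UNIV. c v * (f (m(v := m v + 1)) + 2 * f m + f (m(v := m v - 1)))) / (4 * d)"

primrec Ex :: "nat \<Rightarrow> (('a \<Rightarrow> int) \<Rightarrow> real) \<Rightarrow> ('a \<Rightarrow> int) \<Rightarrow> real" where
  "Ex 0 f m = f m"
| "Ex (Suc k) f m = Ex k (avg f) m"

lemma avg_add: "avg (\<lambda>m. f m + g m) m = avg f m + avg g m"
  by (simp add: avg_def algebra_simps sum.distrib add_divide_distrib)

lemma avg_cmult: "avg (\<lambda>m. a * f m) m = a * avg f m"
  by (simp add: avg_def algebra_simps sum_distrib_left)

lemma avg_const: "avg (\<lambda>m. a) m = a"
proof -
  have "(\<Sum>v\<in>UNIV. c v * (a + 2 * a + a)) = 4 * a * d"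
    by (simp add: sum_distrib_right[symmetric] sum_c)
  then show ?thesis using d_pos neS by (simp add: avg_def)
qed

lemma avg_mono: "(\<And>m. f m \<le> g m) \<Longrightarrow> avg f m \<le> avg g m"
  unfolding avg_def using d_pos
  by (intro divide_right_mono sum_mono mult_left_mono add_mono) auto

lemma Ex_add: "Ex k (\<lambda>m. f m + g m) m = Ex k f m + Ex k g m"
proof (induction k arbitrary: f g)
  case 0 then show ?case by simp
next
  case (Suc k)
  have "avg (\<lambda>m. f m + g m) = (\<lambda>m. avg f m + avg g m)" by (simp add: avg_add fun_eq_iff)
  then show ?case using Suc by simp
qed

lemma Ex_cmult: "Ex k (\<lambda>m. a * f m) m = a * Ex k f m"
proof (induction k arbitrary: f)
  case 0 then show ?case by simp
next
  case (Suc k)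
  have "avg (\<lambda>m. a * f m) = (\<lambda>m. a * avg f m)" by (simp add: avg_cmult fun_eq_iff)
  then show ?case using Suc by simp
qed

lemma Ex_const: "Ex k (\<lambda>m. a) m = a"
proof (induction k)
  case 0 then show ?case by simp
next
  case (Suc k)
  have "avg (\<lambda>m. a) = (\<lambda>m. a)" by (simp add: avg_const fun_eq_iff)
  then show ?case using Suc by simp
qed

lemma Ex_mono: "(\<And>m. f m \<le> g m) \<Longrightarrow> Ex k f m \<le> Ex k g m"
proof (induction k arbitrary: f g)
  case 0 then show ?case by simp
next
  case (Suc k)
  then show ?case using avg_mono by simp
qed

lemma Ex_diff: "Ex k (\<lambda>m. f m - g m) m = Ex k f m - Ex k g m"
  using Ex_add[of k f "\<lambda>m. - g m" m] Ex_cmult[of k "-1" g m] by simp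

lemma Ex_sum: "finite A \<Longrightarrow> Ex k (\<lambda>m. \<Sum>u\<in>A. f u m) m = (\<Sum>u\<in>A. Ex k (f u) m)"
proof (induction A rule: finite_induct)
  case empty then show ?case by (simp add: Ex_const)
next
  case (insert x F)
  then show ?case by (simp add: Ex_add)
qed

lemma Ex_CS: "(Ex k f m)^2 \<le> Ex k (\<lambda>m. (f m)^2) m"
proof -
  define a where "a = Ex k f m"
  have "0 \<le> Ex k (\<lambda>m. (f m - a)^2) m"
    using Ex_const[of k 0 m] Ex_mono[of "\<lambda>_. 0" "\<lambda>m. (f m - a)^2" k m] by simp
  also have "Ex k (\<lambda>m. (f m - a)^2) m = Ex k (\<lambda>m. (f m)^2 + ((-2*a) * f m + a^2)) m"
    by (simp add: power2_eq_square algebra_simps)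
  also have "\<dots> = Ex k (\<lambda>m. (f m)^2) m + (Ex k (\<lambda>m. (-2*a) * f m) m + Ex k (\<lambda>m. a^2) m)"
    by (subst Ex_add, subst Ex_add, rule refl)
  also have "\<dots> = Ex k (\<lambda>m. (f m)^2) m - a^2"
    by (simp only: Ex_cmult Ex_const) (simp add: a_def power2_eq_square)
  finally show ?thesis unfolding a_def by simp
qed

lemma Mop_pow: "(Mop ^^ k) z $ u = Ex k (\<lambda>m. z $ (u + Gm m)) (\<lambda>_. 0)"
proof (induction k arbitrary: z)
  case 0 then show ?case by (simp add: Gm_0)
next
  case (Suc k)
  have "avg (\<lambda>m. z $ (u + Gm m)) = (\<lambda>m. Mop z $ (u + Gm m))"
    unfolding avg_def Mop_nth Gm_plus Gm_minus by (simp add: fun_eq_iff algebra_simps)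
  moreover have "(Mop ^^ Suc k) z = (Mop ^^ k) (Mop z)" by (simp add: funpow_swap1)
  ultimately show ?case using Suc[of "Mop z"] by simp
qed

lemma avg_sq: "avg (\<lambda>m. (real_of_int (m v))^2) m = (real_of_int (m v))^2 + c v / (2 * d)"
proof -
  have "(\<Sum>w\<in>UNIV. c w * ((real_of_int ((m(w := m w + 1)) v))^2 + 2 * (real_of_int (m v))^2
          + (real_of_int ((m(w := m w - 1)) v))^2))
      = (\<Sum>w\<in>UNIV. c w * (4 * (real_of_int (m v))^2) + (if w = v then 2 * c v else 0))"
    by (rule sum.cong) (auto simp: power2_eq_square algebra_simps)
  also have "\<dots> = 4 * (real_of_int (m v))^2 * d + 2 * c v"
    by (simp add: sum.distrib sum_distrib_right[symmetric] sum_c mult.commute)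
  finally show ?thesis using d_pos neS by (simp add: avg_def field_simps)
qed

lemma Ex_sq: "Ex k (\<lambda>m. (real_of_int (m v))^2) m = (real_of_int (m v))^2 + real k * c v / (2 * d)"
proof (induction k arbitrary: m)
  case 0 then show ?case by simp
next
  case (Suc k)
  have "avg (\<lambda>m. (real_of_int (m v))^2) = (\<lambda>m. (real_of_int (m v))^2 + c v / (2 * d))"
    by (simp add: avg_sq fun_eq_iff)
  then have "Ex (Suc k) (\<lambda>m. (real_of_int (m v))^2) m = Ex k (\<lambda>m. (real_of_int (m v))^2 + c v / (2 * d)) m"
    by simp
  also have "\<dots> = (real_of_int (m v))^2 + real k * c v / (2 * d) + c v / (2 * d)"
    by (simp add: Ex_add Ex_const Suc)
  finally show ?case using d_pos neS by (simp add: field_simps)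
qed


end

context cay begin
lemma sqrt_nat_le: "sqrt (real (n::nat)) \<le> real n"
proof (cases "n = 0")
  case False
  then have "real n \<le> real n * real n" by simp
  then have "sqrt (real n) \<le> sqrt (real n * real n)" by (rule real_sqrt_le_mono)
  then show ?thesis by simp
qed simp

lemma Ex_abs: "Ex k (\<lambda>m. \<bar>real_of_int (m v)\<bar>) (\<lambda>_. 0) \<le> c v * sqrt (real k / (2 * d))"
proof -
  let ?E = "Ex k (\<lambda>m. \<bar>real_of_int (m v)\<bar>) (\<lambda>_. 0)"
  have "?E^2 \<le> Ex k (\<lambda>m. \<bar>real_of_int (m v)\<bar>^2) (\<lambda>_. 0)" by (rule Ex_CS)
  also have "\<dots> = real k * c v / (2 * d)" using Ex_sq[of k v "\<lambda>_. 0"] by simp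
  finally have "?E \<le> sqrt (real k * c v / (2 * d))" by (rule real_le_rsqrt)
  also have "\<dots> = sqrt (c v) * sqrt (real k / (2 * d))"
    by (simp add: real_sqrt_mult[symmetric])
  also have "\<dots> \<le> c v * sqrt (real k / (2 * d))"
    by (intro mult_right_mono sqrt_nat_le) simp
  finally show ?thesis .
qed

lemma Ex_psi: "Ex k (\<lambda>m. psi Q (Gm m)) (\<lambda>_. 0) \<le> sqrt (real k / (2 * d)) * (\<Sum>v\<in>UNIV. c v * psi Q v)"
proof -
  have "Ex k (\<lambda>m. psi Q (Gm m)) (\<lambda>_. 0) \<le> Ex k (\<lambda>m. \<Sum>w\<in>UNIV. psi Q w * \<bar>real_of_int (m w)\<bar>) (\<lambda>_. 0)"
    by (rule Ex_mono, rule order_trans[OF psi_Gm], simp add: mult.commute)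
  also have "\<dots> = (\<Sum>w\<in>UNIV. psi Q w * Ex k (\<lambda>m. \<bar>real_of_int (m w)\<bar>) (\<lambda>_. 0))"
    by (simp add: Ex_sum Ex_cmult)
  also have "\<dots> \<le> (\<Sum>w\<in>UNIV. psi Q w * (c w * sqrt (real k / (2 * d))))"
    by (intro sum_mono mult_left_mono Ex_abs psi_nonneg)
  also have "\<dots> = (\<Sum>v\<in>UNIV. (c v * psi Q v) * sqrt (real k / (2 * d)))"
    by (rule sum.cong) (simp_all add: mult_ac)
  also have "\<dots> = (\<Sum>v\<in>UNIV. c v * psi Q v) * sqrt (real k / (2 * d))"
    by (rule sum_distrib_right[symmetric])
  also have "\<dots> = sqrt (real k / (2 * d)) * (\<Sum>v\<in>UNIV. c v * psi Q v)"
    by (rule mult.commute)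
  finally show ?thesis .
qed

lemma boundary_psi: "cay_boundary S Q = (\<Sum>v\<in>UNIV. c v * psi Q v)"
proof -
  have inner: "(\<Sum>w\<in>UNIV - Q. cay_adj S u w) = (\<Sum>v\<in>UNIV. c v * (1 - qi Q (u + v)))" for u
  proof -
    have "(\<Sum>w\<in>UNIV - Q. cay_adj S u w) = (\<Sum>w\<in>UNIV. c (w - u) * (1 - qi Q w))"
      by (rule sum.mono_neutral_cong_left) (auto simp: cay_adj_def qi_def)
    also have "\<dots> = (\<Sum>w\<in>UNIV. c (w + u - u) * (1 - qi Q (w + u)))"
      by (rule sum_shift_univ[symmetric])
    finally show ?thesis by (simp add: add.commute)
  qed
  have "cay_boundary S Q = (\<Sum>u\<in>UNIV. qi Q u * (\<Sum>v\<in>UNIV. c v * (1 - qi Q (u + v))))"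
    unfolding cay_boundary_def inner
    by (rule sum.mono_neutral_cong_left) (auto simp: qi_def)
  also have "\<dots> = (\<Sum>v\<in>UNIV. c v * psi Q v)"
    unfolding psi_def sum_distrib_left by (subst sum.swap) (simp add: mult.left_commute)
  finally show ?thesis .
qed


lemma Mop_pow_linear: "linear (Mop ^^ k)"
proof (induction k)
  case 0 then show ?case by (simp add: linear_id[unfolded id_def])
next
  case (Suc k)
  then show ?case using linear_compose[OF Suc Mop_linear]
    by (simp add: funpow_swap1 comp_def o_def)
qed

lemma Mop_pow_sym: "inner ((Mop ^^ k) a) b = inner a ((Mop ^^ k) b)"
proof (induction k arbitrary: a b)
  case 0 then show ?case by simp
next
  case (Suc k)
  have "inner ((Mop ^^ Suc k) a) b = inner ((Mop ^^ k) (Mop a)) b" by (simp add: funpow_swap1)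
  also have "\<dots> = inner (Mop a) ((Mop ^^ k) b)" by (rule Suc)
  also have "\<dots> = inner a (Mop ((Mop ^^ k) b))" by (rule Mop_sym)
  finally show ?case by simp
qed

lemma Mop_pow_contr: "norm ((Mop ^^ k) z) \<le> norm z"
proof (induction k)
  case 0 then show ?case by simp
next
  case (Suc k)
  then show ?case using Mop_contr[of "(Mop ^^ k) z"] by simp
qed

lemma Mop_pow_one: "(Mop ^^ k) (\<chi> u. 1) = (\<chi> u. 1)"
  by (induction k) (simp_all add: Mop_one)

lemma Lap_Mop: "cay_laplacian S z = 2 *\<^sub>R (z - Mop z)"
  by (simp add: Mop_lap)

end

lemma sum_qi: "(\<Sum>u\<in>UNIV. qi Q u) = real (card (Q :: 'a::finite set))"
proof -
  have "(\<Sum>u\<in>UNIV. qi Q u) = (\<Sum>u\<in>Q. 1)"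
    unfolding qi_def by (rule sum.mono_neutral_cong_right) auto
  then show ?thesis by simp
qed

lemma norm_centered:
  "(norm (centered (indicator_vec (Q :: 'a::finite set))))^2 = real (card Q) - real (card Q)^2 / real CARD('a)"
proof -
  define a where "a = real (card Q) / real CARD('a)"
  have n0: "real CARD('a) > 0" by simp
  have comp: "centered (indicator_vec Q) $ u = qi Q u - a" for u
  proof -
    have "(\<Sum>u\<in>UNIV. indicator_vec Q $ u) = real (card Q)"
      using sum_qi[of Q] by (simp add: indicator_vec_def qi_def)
    then show ?thesis by (simp add: centered_def a_def indicator_vec_def qi_def)
  qed
  have "(norm (centered (indicator_vec Q)))^2 = (\<Sum>u\<in>UNIV. (qi Q u - a)^2)"
    unfolding power2_norm_eq_inner inner_vec_def comp by (simp add: power2_eq_square)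
  also have "\<dots> = (\<Sum>u\<in>UNIV. qi Q u - 2 * a * qi Q u + a^2)"
    by (rule sum.cong) (auto simp: qi_def power2_eq_square algebra_simps)
  also have "\<dots> = real (card Q) - 2 * a * real (card Q) + real CARD('a) * a^2"
    by (simp add: sum.distrib sum_subtractf sum_qi sum_distrib_left[symmetric])
  also have "\<dots> = real (card Q) - real (card Q)^2 / real CARD('a)"
    using n0 by (simp add: a_def field_simps power2_eq_square)
  finally show ?thesis .
qed

lemma orth_proj_eq:
  fixes W :: "'v::euclidean_space set"
  assumes "p \<in> W" "\<And>w. w \<in> W \<Longrightarrow> inner (x - p) w = 0" "subspace W"
  shows "orth_proj W x = p"
  unfolding orth_proj_def
proof (rule the_equality)
  show "p \<in> W \<and> (\<forall>w\<in>W. inner (x - p) w = 0)" using assms by auto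
next
  fix p' assume h: "p' \<in> W \<and> (\<forall>w\<in>W. inner (x - p') w = 0)"
  then have dW: "p - p' \<in> W" using assms by (simp add: subspace_diff)
  have "inner (p - p') (p - p') = inner (x - p') (p - p') - inner (x - p) (p - p')"
    by (simp add: inner_diff_left)
  also have "\<dots> = 0" using h dW assms(2) by simp
  finally show "p' = p" by simp
qed


context cay
begin

lemma main:
  fixes \<epsilon> :: real and Q :: "'a set"
  assumes eps0: "0 < \<epsilon>" and eps1: "\<epsilon> \<le> 1"
    and Q1: "1 \<le> card Q" and Qhalf: "real (card Q) \<le> real CARD('a) / 2"
    and cond: "cay_cond_set S Q \<le> 2 * cay_conductance S"
  shows "(norm (orth_proj (low_space S (100 * d * (cay_conductance S)\<^sup>2 / \<epsilon>\<^sup>2))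
              (centered (indicator_vec Q))))\<^sup>2
         \<ge> (1 - \<epsilon>) * (norm (centered (indicator_vec Q)))\<^sup>2"
proof -
  define \<phi> where "\<phi> = cay_conductance S"
  define \<tau> where "\<tau> = 100 * d * \<phi>\<^sup>2 / \<epsilon>\<^sup>2"
  define x where "x = indicator_vec Q"
  define xb where "xb = centered x"
  define B where "B = cay_boundary S Q"
  define one :: "(real, 'a) vec" where "one = (\<chi> u. 1)"
  define E where "E = {z. z \<noteq> 0 \<and> (\<exists>lam. lam \<le> \<tau> \<and> cay_laplacian S z = lam *\<^sub>R z)}"
  define q where "q = real (card Q)"
  have q1: "q \<ge> 1" using Q1 by (simp add: q_def)
  have tau0: "\<tau> \<ge> 0" using d_pos unfolding \<tau>_def by simp
  have B_eq: "B = (\<Sum>v\<in>UNIV. c v * psi Q v)" unfolding B_def by (rule boundary_psi)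
  have B0: "B \<ge> 0" unfolding B_eq by (intro sum_nonneg mult_nonneg_nonneg psi_nonneg) auto
  have Ble: "B \<le> 2 * \<phi> * d * q"
  proof -
    have "B / (d * q) \<le> 2 * \<phi>" using cond by (simp add: cay_cond_set_def B_def \<phi>_def q_def)
    then show ?thesis using d_pos q1 by (simp add: divide_le_eq mult.commute mult.left_commute)
  qed
  have xb_norm: "(norm xb)^2 \<ge> q / 2"
  proof -
    have "(norm xb)^2 = q - q^2 / real CARD('a)"
      unfolding xb_def x_def q_def by (rule norm_centered)
    moreover have "q^2 / real CARD('a) \<le> q / 2"
    proof -
      have "q / real CARD('a) \<le> 1 / 2" using Qhalf by (simp add: q_def divide_le_eq)
      then have "q * (q / real CARD('a)) \<le> q * (1/2)" using q1 by (intro mult_left_mono) auto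
      then show ?thesis by (simp add: power2_eq_square)
    qed
    ultimately show ?thesis by simp
  qed
  have fin: "(1 - \<epsilon>) * (norm xb)^2 \<le> (norm xb)^2"
    using mult_nonneg_nonneg[of \<epsilon> "(norm xb)^2"] eps0 by (simp add: algebra_simps)
  have goal_form: "(norm (orth_proj (low_space S \<tau>) xb))\<^sup>2 \<ge> (1 - \<epsilon>) * (norm xb)\<^sup>2"
  proof (cases "\<tau> \<ge> 2")
    case True
    then have "low_space S \<tau> = UNIV" by (simp add: low_space_def)
    moreover have "orth_proj UNIV xb = xb" by (rule orth_proj_eq) auto
    ultimately show ?thesis using fin by simp
  next
    case False
    then have tau2: "\<tau> < 2" by simp
    have W_def: "low_space S \<tau> = span E" using False by (simp add: low_space_def E_def)
    show ?thesis
    proof (cases "B = 0")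
      case True
      have cv: "c v \<noteq> 0 \<Longrightarrow> (u \<in> Q \<longleftrightarrow> u + v \<in> Q)" for u v
      proof -
        assume cv0: "c v \<noteq> 0"
        have "c w * psi Q w = 0" for w
          using True unfolding B_eq
          by (subst (asm) sum_nonneg_eq_0_iff) (auto intro: mult_nonneg_nonneg psi_nonneg)
        then have p1: "psi Q v = 0" and p2: "psi Q (- v) = 0"
          using cv0 c_neg[of v] by (metis mult_eq_0_iff)+
        have z: "psi Q g = 0 \<Longrightarrow> u \<in> Q \<Longrightarrow> u + g \<in> Q" for g u
          unfolding psi_def qi_def
          by (subst (asm) sum_nonneg_eq_0_iff) (auto split: if_splits)
        show ?thesis using z[OF p1, of u] z[OF p2, of "u + v"] by auto
      qed
      have Mx: "Mop x = x"
      proof -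
        have "(\<Sum>v\<in>UNIV. c v * x$(u+v)) = d * x$u" for u
        proof -
          have "(\<Sum>v\<in>UNIV. c v * x$(u+v)) = (\<Sum>v\<in>UNIV. c v * x$u)"
          proof (rule sum.cong[OF refl])
            fix v
            show "c v * x$(u+v) = c v * x$u"
            proof (cases "c v = 0")
              case True then show ?thesis by simp
            next
              case False then show ?thesis using cv[OF False, of u] by (simp add: x_def indicator_vec_def)
            qed
          qed
          then show ?thesis by (simp add: sum_distrib_right[symmetric] sum_c)
        qed
        then show ?thesis using d_pos neS by (simp add: vec_eq_iff Mop_nth2)
      qed
      have Lx: "cay_laplacian S x = 0 *\<^sub>R x" by (simp add: Lap_Mop Mx)
      have L1: "cay_laplacian S one = 0 *\<^sub>R one" by (simp add: Lap_Mop Mop_one one_def)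
      have "x \<noteq> 0"
      proof
        assume "x = 0"
        obtain u where "u \<in> Q" using Q1 by (metis card.empty ex_in_conv not_one_le_zero)
        then have "x $ u = 1" by (simp add: x_def indicator_vec_def)
        then show False using \<open>x = 0\<close> by simp
      qed
      then have xE: "x \<in> E" using Lx tau0 by (auto simp: E_def)
      have "one \<noteq> 0" by (simp add: one_def vec_eq_iff)
      then have oE: "one \<in> E" using L1 tau0 by (auto simp: E_def)
      have "xb \<in> span E" unfolding xb_def centered_def
        using xE oE by (metis (no_types, lifting) one_def span_base span_diff span_mul)
      then have "orth_proj (span E) xb = xb" by (intro orth_proj_eq) auto
      then show ?thesis using fin W_def by simp
    next
      case False
      have Bpos: "B > 0" using B0 False by simp
      have phipos: "\<phi> > 0"
      proof (rule ccontr)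
        assume "\<not> \<phi> > 0"
        then have "2 * \<phi> \<le> 0" by simp
        moreover have "d * q \<ge> 0" using d_pos q1 by simp
        ultimately have "(2 * \<phi>) * (d * q) \<le> 0" by (rule mult_nonpos_nonneg)
        then show False using Ble Bpos by (simp add: mult_ac)
      qed
      have taupos: "\<tau> > 0" using phipos d_pos eps0 unfolding \<tau>_def by simp
      define \<beta> where "\<beta> = 1 - \<tau> / 2"
      have beta0: "\<beta> > 0" using tau2 by (simp add: \<beta>_def)
      obtain p y where pW: "p \<in> span E" and yorth: "\<And>w. w \<in> span E \<Longrightarrow> orthogonal y w"
        and xpy: "xb = p + y"
        using orthogonal_subspace_decomp_exists by blast
      have proj: "orth_proj (span E) xb = p"
        by (rule orth_proj_eq) (use pW yorth xpy in \<open>auto simp: orthogonal_def\<close>)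
      define V where "V = {z. \<forall>w\<in>span E. inner z w = 0}"
      have subV: "subspace V"
        unfolding V_def subspace_def by (auto simp: inner_add_left)
      have yV: "y \<in> V" using yorth by (simp add: V_def orthogonal_def)
      have MW: "Mop w \<in> span E" if "w \<in> span E" for w
      proof -
        have "Mop ` E \<subseteq> span E"
        proof
          fix z assume "z \<in> Mop ` E"
          then obtain e lam where "e \<in> E" "cay_laplacian S e = lam *\<^sub>R e" "z = Mop e"
            by (auto simp: E_def)
          then have "z = (1 - lam / 2) *\<^sub>R e" by (simp add: Mop_lap algebra_simps)
          then show "z \<in> span E" using \<open>e \<in> E\<close> by (simp add: span_base span_mul)
        qed
        then have "span (Mop ` E) \<subseteq> span E" by (metis span_mono span_span)
        then show ?thesis using that span_linear_image[OF Mop_linear, of E] by auto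
      qed
      have MV: "Mop z \<in> V" if "z \<in> V" for z
        using that MW by (simp add: V_def Mop_sym)
      have eig: "\<mu> < \<beta>" if "w \<in> V" "w \<noteq> 0" "Mop w = \<mu> *\<^sub>R w" for w \<mu>
      proof (rule ccontr)
        assume "\<not> \<mu> < \<beta>"
        then have le: "2 * (1 - \<mu>) \<le> \<tau>" by (simp add: \<beta>_def)
        have "cay_laplacian S w = (2 * (1 - \<mu>)) *\<^sub>R w"
          using that(3) by (simp add: Lap_Mop algebra_simps)
        then have "w \<in> E" using le that(2) by (auto simp: E_def)
        then have "inner w w = 0" using that(1) by (simp add: V_def span_base)
        then show False using that(2) by simp
      qed
      have bound1: "norm (Mop z) \<le> \<beta> * norm z" if "z \<in> V" for z
        by (rule spectral_bound[OF Mop_linear _ Mop_psd subV MV eig beta0 that]) (simp_all add: Mop_sym)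
      have boundk: "(Mop ^^ k) z \<in> V \<and> norm ((Mop ^^ k) z) \<le> \<beta> ^ k * norm z" if "z \<in> V" for z k
      proof (induction k)
        case 0 then show ?case using that by simp
      next
        case (Suc k)
        then have "norm (Mop ((Mop ^^ k) z)) \<le> \<beta> * norm ((Mop ^^ k) z)" using bound1 by blast
        also have "\<dots> \<le> \<beta> * (\<beta> ^ k * norm z)" using Suc beta0 by (intro mult_left_mono) auto
        finally show ?case using Suc MV by (simp add: mult.assoc)
      qed
      define k where "k = nat \<lceil>2 / \<tau>\<rceil>"
      have k_ge: "real k \<ge> 2 / \<tau>" unfolding k_def by linarith
      have k_lt: "real k \<le> 2 / \<tau> + 1"
      proof -
        have "2 / \<tau> > 0" using taupos by simp
        then have "\<lceil>0::real\<rceil> \<le> \<lceil>2 / \<tau>\<rceil>" by (intro ceiling_mono) simp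
        then have "0 \<le> \<lceil>2 / \<tau>\<rceil>" by simp
        then have "real k = of_int \<lceil>2 / \<tau>\<rceil>" unfolding k_def by simp
        then show ?thesis using of_int_ceiling_le_add_one[of "2 / \<tau>"] by simp
      qed
      have kt_ge: "real k * \<tau> \<ge> 2" using k_ge taupos by (simp add: divide_le_eq)
      have kt_lt: "real k * \<tau> < 4"
      proof -
        have "real k * \<tau> \<le> (2 / \<tau> + 1) * \<tau>" using k_lt taupos by (intro mult_right_mono) auto
        moreover have "(2 / \<tau> + 1) * \<tau> = 2 + \<tau>" using taupos by (simp add: field_simps)
        ultimately show ?thesis using tau2 by linarith
      qed
      have betak: "\<beta> ^ k \<le> 2 / 5"
      proof -
        have "\<beta> ^ k \<le> exp (- \<tau> / 2) ^ k"
          using beta0 exp_ge_add_one_self[of "- \<tau> / 2"] unfolding \<beta>_def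
          by (intro power_mono) auto
        also have "\<dots> = exp (real k * (- \<tau> / 2))" by (rule exp_of_nat_mult[symmetric])
        also have "\<dots> \<le> exp (-1)" using kt_ge by simp
        also have "\<dots> \<le> 2 / 5"
        proof -
          have "5 / 2 \<le> exp (1::real)" using exp_lower_Taylor_quadratic[of 1] by simp
          then show ?thesis by (simp add: exp_minus field_simps)
        qed
        finally show ?thesis .
      qed
      let ?Mk = "Mop ^^ k"
      have linK: "linear ?Mk" by (rule Mop_pow_linear)
      have My: "?Mk y \<in> V" and Myn: "norm (?Mk y) \<le> \<beta> ^ k * norm y" using boundk[OF yV] by auto
      have c1: "inner p (?Mk y) = 0" using My pW by (simp add: V_def inner_commute)
      have c2: "inner y (?Mk p) = 0" using My pW by (simp add: V_def Mop_pow_sym[symmetric])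
      have py: "inner p y = 0" using yV pW by (simp add: V_def inner_commute)
      have t1: "inner p (?Mk p) \<le> (norm p)^2"
      proof -
        have "inner p (?Mk p) \<le> norm p * norm (?Mk p)" by (rule norm_cauchy_schwarz)
        also have "\<dots> \<le> norm p * norm p" by (intro mult_left_mono Mop_pow_contr) simp
        finally show ?thesis by (simp add: power2_eq_square)
      qed
      have t2: "inner y (?Mk y) \<le> \<beta> ^ k * (norm y)^2"
      proof -
        have "inner y (?Mk y) \<le> norm y * norm (?Mk y)" by (rule norm_cauchy_schwarz)
        also have "\<dots> \<le> norm y * (\<beta> ^ k * norm y)" by (intro mult_left_mono Myn) simp
        finally show ?thesis by (simp add: power2_eq_square mult_ac)
      qed
      have xbn: "(norm xb)^2 = (norm p)^2 + (norm y)^2"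
        using py by (simp add: xpy power2_norm_eq_inner inner_add_left inner_add_right inner_commute)
      have Dge: "(norm xb)^2 - inner xb (?Mk xb) \<ge> (1 - \<beta> ^ k) * (norm y)^2"
      proof -
        have "inner xb (?Mk xb) = inner p (?Mk p) + inner p (?Mk y) + inner y (?Mk p) + inner y (?Mk y)"
          by (simp add: xpy linear_add[OF linK] inner_add_left inner_add_right)
        then show ?thesis using c1 c2 t1 t2 xbn by (simp add: algebra_simps)
      qed
      have Deq: "(norm xb)^2 - inner xb (?Mk xb) = inner x x - inner x (?Mk x)"
      proof -
        define a where "a = (\<Sum>u\<in>UNIV. x $ u) / real CARD('a)"
        have xb_eq: "xb = x - a *\<^sub>R one" by (simp add: xb_def centered_def a_def one_def)
        have "?Mk xb = ?Mk x - a *\<^sub>R one"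
          by (simp add: xb_eq linear_diff[OF linK] linear_scale[OF linK] Mop_pow_one one_def)
        then have "inner xb (xb - ?Mk xb) = inner xb (x - ?Mk x)" by (simp add: xb_eq)
        also have "\<dots> = inner x (x - ?Mk x) - a * inner one (x - ?Mk x)"
          by (simp add: xb_eq inner_diff_left)
        also have "inner one (?Mk x) = inner one x"
          using Mop_pow_sym[of k one x] by (simp add: Mop_pow_one one_def inner_commute)
        then have "inner one (x - ?Mk x) = 0" by (simp add: inner_diff_right)
        finally show ?thesis by (simp add: power2_norm_eq_inner inner_diff_right)
      qed
      have Dpsi: "inner x x - inner x (?Mk x) = Ex k (\<lambda>m. psi Q (Gm m)) (\<lambda>_. 0)"
      proof -
        have xq: "x $ u = qi Q u" for u by (simp add: x_def indicator_vec_def qi_def)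
        have "inner x x - inner x (?Mk x) = (\<Sum>u\<in>UNIV. qi Q u * (1 - Ex k (\<lambda>m. qi Q (u + Gm m)) (\<lambda>_. 0)))"
          by (simp add: inner_vec xq Mop_pow sum_subtractf[symmetric] algebra_simps)
             (rule sum.cong, auto simp: qi_def)
        also have "\<dots> = (\<Sum>u\<in>UNIV. Ex k (\<lambda>m. qi Q u * (1 - qi Q (u + Gm m))) (\<lambda>_. 0))"
          by (simp add: Ex_cmult Ex_diff Ex_const)
        also have "\<dots> = Ex k (\<lambda>m. psi Q (Gm m)) (\<lambda>_. 0)"
          unfolding psi_def by (simp add: Ex_sum)
        finally show ?thesis .
      qed
      define sk where "sk = sqrt (real k / (2 * d))"
      have sk0: "sk \<ge> 0" using d_pos by (simp add: sk_def)
      have main_ineq: "(1 - \<beta> ^ k) * (norm y)^2 \<le> sk * B"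
        using Dge Deq Dpsi Ex_psi[of k Q] B_eq by (simp add: sk_def)
      have skb: "sk * (2 * \<phi> * d) \<le> 3 / 10 * \<epsilon>"
      proof -
        have "(sk * (2 * \<phi> * d))^2 = 2 * real k * \<phi>^2 * d"
          using d_pos by (simp add: sk_def power_mult_distrib power2_eq_square field_simps)
        also have "\<dots> = 2 * (real k * \<tau>) * \<epsilon>^2 / 100"
          using eps0 by (simp add: \<tau>_def field_simps)
        also have "\<dots> \<le> (3 / 10 * \<epsilon>)^2"
          using kt_lt eps0 by (simp add: power2_eq_square field_simps)
        finally show ?thesis using eps0 by (simp add: power2_le_iff_abs_le)
      qed
      have "(3/5) * (norm y)^2 \<le> (1 - \<beta> ^ k) * (norm y)^2"
        using betak by (intro mult_right_mono) auto
      also have "\<dots> \<le> sk * B" by (rule main_ineq)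
      also have "\<dots> \<le> sk * (2 * \<phi> * d * q)" using Ble sk0 by (intro mult_left_mono)
      also have "\<dots> = (sk * (2 * \<phi> * d)) * q" by simp
      also have "\<dots> \<le> (3 / 10 * \<epsilon>) * q" using skb q1 by (intro mult_right_mono) auto
      finally have "(norm y)^2 \<le> \<epsilon> * (q / 2)" by simp
      also have "\<dots> \<le> \<epsilon> * (norm xb)^2" using xb_norm eps0 by (intro mult_left_mono) auto
      finally have "(norm y)^2 \<le> \<epsilon> * (norm xb)^2" .
      then show ?thesis using W_def proj xbn by (simp add: algebra_simps)
    qed
  qed
  then show ?thesis by (simp add: \<tau>_def \<phi>_def xb_def x_def)
qed

end

theorem theorem5p1:
  fixes S :: "'a::{ab_group_add,finite} multiset"
    and \<epsilon> :: real and Q :: "'a set"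
  assumes "symmetric_mset S"
    and "S \<noteq> {#}"
    and "0 < \<epsilon>" and "\<epsilon> \<le> 1"
    and "1 \<le> card Q" and "real (card Q) \<le> real CARD('a) / 2"
    and "cay_cond_set S Q \<le> 2 * cay_conductance S"
  shows "let \<tau> = 100 * real (size S) * (cay_conductance S)\<^sup>2 / \<epsilon>\<^sup>2
         in (norm (orth_proj (low_space S \<tau>) (centered (indicator_vec Q))))\<^sup>2
            \<ge> (1 - \<epsilon>) * (norm (centered (indicator_vec Q)))\<^sup>2"
proof -
  interpret cay S using assms(1,2) by unfold_locales
  show ?thesis using main[OF assms(3-7)] by (simp add: Let_def)
qed

end
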